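(* Let $D$ be a simple drawing of $K_n$ with $n\ge 6$ whose rotation system is generalized twisted, and let $(C_1,C_2)$ be a pair of antipodal vi-cells of $D$. Then for every vertex $v$ that lies neither on the boundary of $C_1$ nor on the boundary of $C_2$, there is a pair $(\bar C_1,\bar C_2)$ of antipodal vi-cells of the subdrawing $D\setminus\{v\}$ with $C_1\subseteq \bar C_1$ and $C_2\subseteq \bar C_2$.
   Context: A simple drawing of a graph maps vertices to distinct points of the plane and edges to Jordan arcs joining their endpoints and not passing through other vertices, such that any two edges share at most one point, which is either a common endpoint or a proper crossing. $D\setminus\{v\}$ denotes $D$ with the vertex $v$ and all edges incident to $v$ removed. Cells are the connected components of the complement of the drawing; a vi-cell is a cell with a vertex on its boundary. A triangle is the closed curve formed by three vertices and the three edges between them, dividing the plane into two sides; two cells are antipodal if for every triangle they lie on different sides. The rotation system (clockwise cyclic orders at the vertices) is generalized twisted if it is the rotation system of a simple drawing strongly isomorphic (via a plane homeomorphism) to one with a point $O$ such that every ray from $O$ crosses every edge at most once and some ray from $O$ crosses all edges. *)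

theory Defs
  imports "HOL-Analysis.Analysis"
begin

text \<open>Drawings of the complete graph on a finite vertex set V (a set of naturals) in the
  plane, modelled as the complex plane.  p v is the position of vertex v; for i < j the
  edge ij is the curve g i j, a Jordan arc from p i to p j.\<close>

definition edge :: "(nat \<Rightarrow> nat \<Rightarrow> real \<Rightarrow> complex) \<Rightarrow> nat \<Rightarrow> nat \<Rightarrow> complex set" where
  "edge g i j = path_image (g (min i j) (max i j))"

definition ocurve :: "(nat \<Rightarrow> nat \<Rightarrow> real \<Rightarrow> complex) \<Rightarrow> nat \<Rightarrow> nat \<Rightarrow> real \<Rightarrow> complex" where
  "ocurve g i j = (if i < j then g i j else reversepath (g j i))"

definition proper_crossing :: "complex set \<Rightarrow> complex set \<Rightarrow> complex \<Rightarrow> bool" where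
  "proper_crossing A B q \<longleftrightarrow>
     (\<exists>U f f'. open U \<and> q \<in> U \<and> homeomorphism U (ball 0 1) f f' \<and> f q = 0 \<and>
        f ` (A \<inter> U) = ball 0 1 \<inter> \<real> \<and> f ` (B \<inter> U) = ball 0 1 \<inter> {z. Re z = 0})"

definition simple_drawing :: "nat set \<Rightarrow> (nat \<Rightarrow> complex) \<Rightarrow> (nat \<Rightarrow> nat \<Rightarrow> real \<Rightarrow> complex) \<Rightarrow> bool" where
  "simple_drawing V p g \<longleftrightarrow>
     inj_on p V \<and>
     (\<forall>i\<in>V. \<forall>j\<in>V. i < j \<longrightarrow> arc (g i j) \<and> pathstart (g i j) = p i \<and> pathfinish (g i j) = p j) \<and>
     (\<forall>i\<in>V. \<forall>j\<in>V. \<forall>k\<in>V. i \<noteq> j \<and> k \<noteq> i \<and> k \<noteq> j \<longrightarrow> p k \<notin> edge g i j) \<and>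
     (\<forall>i\<in>V. \<forall>j\<in>V. \<forall>k\<in>V. i \<noteq> j \<and> i \<noteq> k \<and> j \<noteq> k \<longrightarrow> edge g i j \<inter> edge g i k = {p i}) \<and>
     (\<forall>i\<in>V. \<forall>j\<in>V. \<forall>k\<in>V. \<forall>l\<in>V. i \<noteq> j \<and> k \<noteq> l \<and> i \<noteq> k \<and> i \<noteq> l \<and> j \<noteq> k \<and> j \<noteq> l \<longrightarrow>
        edge g i j \<inter> edge g k l = {} \<or>
        (\<exists>q. edge g i j \<inter> edge g k l = {q} \<and> proper_crossing (edge g i j) (edge g k l) q))"

definition drawing_set :: "nat set \<Rightarrow> (nat \<Rightarrow> complex) \<Rightarrow> (nat \<Rightarrow> nat \<Rightarrow> real \<Rightarrow> complex) \<Rightarrow> complex set" where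
  "drawing_set V p g = p ` V \<union> \<Union>{edge g i j | i j. i \<in> V \<and> j \<in> V \<and> i \<noteq> j}"

definition cells :: "nat set \<Rightarrow> (nat \<Rightarrow> complex) \<Rightarrow> (nat \<Rightarrow> nat \<Rightarrow> real \<Rightarrow> complex) \<Rightarrow> complex set set" where
  "cells V p g = components (- drawing_set V p g)"

definition vi_cell :: "nat set \<Rightarrow> (nat \<Rightarrow> complex) \<Rightarrow> (nat \<Rightarrow> nat \<Rightarrow> real \<Rightarrow> complex) \<Rightarrow> complex set \<Rightarrow> bool" where
  "vi_cell V p g C \<longleftrightarrow> C \<in> cells V p g \<and> (\<exists>v\<in>V. p v \<in> frontier C)"

definition triangle :: "(nat \<Rightarrow> nat \<Rightarrow> real \<Rightarrow> complex) \<Rightarrow> nat \<Rightarrow> nat \<Rightarrow> nat \<Rightarrow> complex set" where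
  "triangle g a b c = edge g a b \<union> edge g b c \<union> edge g a c"

definition antipodal :: "nat set \<Rightarrow> (nat \<Rightarrow> nat \<Rightarrow> real \<Rightarrow> complex) \<Rightarrow> complex set \<Rightarrow> complex set \<Rightarrow> bool" where
  "antipodal V g C1 C2 \<longleftrightarrow>
     (\<forall>a\<in>V. \<forall>b\<in>V. \<forall>c\<in>V. a \<noteq> b \<and> a \<noteq> c \<and> b \<noteq> c \<longrightarrow>
        (C1 \<subseteq> inside (triangle g a b c) \<and> C2 \<subseteq> outside (triangle g a b c)) \<or>
        (C1 \<subseteq> outside (triangle g a b c) \<and> C2 \<subseteq> inside (triangle g a b c)))"

text \<open>Rotation systems.  For a curve c starting at c 0, first_hit c r is the first point of c at
  distance r from c 0.  cw_dist a b is the clockwise angle from direction a to direction b.\<close>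
definition first_hit :: "(real \<Rightarrow> complex) \<Rightarrow> real \<Rightarrow> complex" where
  "first_hit c r = c (Inf {t \<in> {0..1}. cmod (c t - c 0) = r})"

definition cw_dist :: "complex \<Rightarrow> complex \<Rightarrow> real" where
  "cw_dist a b = 2 * pi * frac ((Arg a - Arg b) / (2 * pi))"

text \<open>sigma is the clockwise rotation at v: sigma w is the clockwise successor of neighbour w,
  read off from the points where the edges first leave all sufficiently small circles around v.\<close>
definition has_rotation :: "nat set \<Rightarrow> (nat \<Rightarrow> complex) \<Rightarrow> (nat \<Rightarrow> nat \<Rightarrow> real \<Rightarrow> complex) \<Rightarrow> nat \<Rightarrow> (nat \<Rightarrow> nat) \<Rightarrow> bool" where
  "has_rotation V p g v \<sigma> \<longleftrightarrow>
     (\<exists>r0>0. \<forall>r. 0 < r \<and> r < r0 \<longrightarrow>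
        (let q = (\<lambda>w. first_hit (ocurve g v w) r - p v) in
         \<forall>w\<in>V - {v}. \<sigma> w \<in> V - {v, w} \<and>
            (\<forall>x\<in>V - {v, w, \<sigma> w}. cw_dist (q w) (q (\<sigma> w)) < cw_dist (q w) (q x))))"

definition same_rotation_system :: "nat set \<Rightarrow> (nat \<Rightarrow> complex) \<Rightarrow> (nat \<Rightarrow> nat \<Rightarrow> real \<Rightarrow> complex) \<Rightarrow>
    (nat \<Rightarrow> complex) \<Rightarrow> (nat \<Rightarrow> nat \<Rightarrow> real \<Rightarrow> complex) \<Rightarrow> bool" where
  "same_rotation_system V p g p' g' \<longleftrightarrow>
     (\<exists>\<rho>. \<forall>v\<in>V. has_rotation V p g v (\<rho> v) \<and> has_rotation V p' g' v (\<rho> v))"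

definition ray :: "complex \<Rightarrow> complex \<Rightarrow> complex set" where
  "ray c0 d = {c0 + of_real t * d | t. t \<ge> 0}"

definition generalized_twisted_drawing :: "nat set \<Rightarrow> (nat \<Rightarrow> complex) \<Rightarrow> (nat \<Rightarrow> nat \<Rightarrow> real \<Rightarrow> complex) \<Rightarrow> bool" where
  "generalized_twisted_drawing V p g \<longleftrightarrow> simple_drawing V p g \<and>
     (\<exists>c0. (\<forall>d. d \<noteq> 0 \<longrightarrow> (\<forall>i\<in>V. \<forall>j\<in>V. i \<noteq> j \<longrightarrow>
              (\<forall>x y. x \<in> ray c0 d \<inter> edge g i j \<and> y \<in> ray c0 d \<inter> edge g i j \<longrightarrow> x = y))) \<and>
          (\<exists>d. d \<noteq> 0 \<and> (\<forall>i\<in>V. \<forall>j\<in>V. i \<noteq> j \<longrightarrow> ray c0 d \<inter> edge g i j \<noteq> {})))"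

definition generalized_twisted_rotation :: "nat set \<Rightarrow> (nat \<Rightarrow> complex) \<Rightarrow> (nat \<Rightarrow> nat \<Rightarrow> real \<Rightarrow> complex) \<Rightarrow> bool" where
  "generalized_twisted_rotation V p g \<longleftrightarrow>
     (\<exists>p'' g'' h h'. generalized_twisted_drawing V p'' g'' \<and> homeomorphism UNIV UNIV h h' \<and>
        same_rotation_system V p g (h \<circ> p'') (\<lambda>i j. h \<circ> g'' i j))"

end

theory Submission
  imports Defs
begin

lemma same_side:
  assumes "connected K" "K \<inter> T = {}" "x \<in> K" "y \<in> K"
  shows "(x \<in> inside T \<longleftrightarrow> y \<in> inside T) \<and> (x \<in> outside T \<longleftrightarrow> y \<in> outside T)"
proof -
  have "K \<subseteq> connected_component_set (- T) x"
    using assms by (intro connected_component_maximal) auto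
  then have "connected_component_set (- T) y = connected_component_set (- T) x"
    using assms(4) by (intro connected_component_eq) auto
  then show ?thesis using assms unfolding inside_def outside_def by auto
qed

lemma extend_side:
  assumes "connected K" "K \<inter> T = {}" "x \<in> C" "C \<subseteq> K"
  shows "C \<subseteq> inside T \<Longrightarrow> K \<subseteq> inside T" and "C \<subseteq> outside T \<Longrightarrow> K \<subseteq> outside T"
  using same_side[OF assms(1,2)] assms(3,4) by blast+

lemma extend_cell:
  assumes "vi_cell V p g C" "W \<subseteq> V" "\<forall>u\<in>V - W. p u \<notin> frontier C"
  shows "\<exists>C'. vi_cell W p g C' \<and> C \<subseteq> C' \<and> connected C' \<and> C' \<inter> drawing_set W p g = {}
     \<and> (\<exists>x. x \<in> C)"
proof -
  from assms(1) obtain x where x: "x \<in> - drawing_set V p g"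
      and C: "C = connected_component_set (- drawing_set V p g) x"
    unfolding vi_cell_def cells_def components_iff by blast
  from assms(1) obtain u where u: "u \<in> V" "p u \<in> frontier C"
    unfolding vi_cell_def by blast
  have uW: "u \<in> W" using u assms(3) by blast
  have sub: "drawing_set W p g \<subseteq> drawing_set V p g"
    using assms(2) unfolding drawing_set_def by blast
  define C' where "C' = connected_component_set (- drawing_set W p g) x"
  have xW: "x \<in> - drawing_set W p g" using x sub by blast
  have CC': "C \<subseteq> C'" unfolding C C'_def
    by (rule connected_component_mono) (use sub in blast)
  have comp: "C' \<in> cells W p g" unfolding cells_def C'_def using xW by (rule componentsI)
  have dis: "C' \<inter> drawing_set W p g = {}" unfolding C'_def
    using connected_component_subset by blast
  have puD: "p u \<in> drawing_set W p g" using uW unfolding drawing_set_def by blast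
  have "p u \<in> closure C'" using u(2) CC' closure_mono unfolding frontier_def by blast
  moreover have "p u \<notin> interior C'" using puD dis interior_subset by blast
  ultimately have "p u \<in> frontier C'" unfolding frontier_def by blast
  then have "vi_cell W p g C'" using comp uW unfolding vi_cell_def by blast
  moreover have "x \<in> C" unfolding C using x by simp
  ultimately show ?thesis using CC' dis unfolding C'_def by blast
qed

theorem lemma25:
  fixes n :: nat and p :: "nat \<Rightarrow> complex" and g :: "nat \<Rightarrow> nat \<Rightarrow> real \<Rightarrow> complex"
    and C1 C2 :: "complex set" and v :: nat
  assumes "n \<ge> 6"
    and "simple_drawing {..<n} p g"
    and "generalized_twisted_rotation {..<n} p g"
    and "vi_cell {..<n} p g C1" and "vi_cell {..<n} p g C2"
    and "antipodal {..<n} g C1 C2"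
    and "v < n" and "p v \<notin> frontier C1" and "p v \<notin> frontier C2"
  shows "\<exists>C1' C2'. vi_cell ({..<n} - {v}) p g C1' \<and> vi_cell ({..<n} - {v}) p g C2' \<and>
           antipodal ({..<n} - {v}) g C1' C2' \<and> C1 \<subseteq> C1' \<and> C2 \<subseteq> C2'"
proof -
  let ?W = "{..<n} - {v}"
  obtain A where A: "vi_cell ?W p g A" "C1 \<subseteq> A" "connected A" "A \<inter> drawing_set ?W p g = {}"
      and x1: "\<exists>x. x \<in> C1"
    using extend_cell[OF assms(4), of ?W] assms(8) by blast
  obtain B where B: "vi_cell ?W p g B" "C2 \<subseteq> B" "connected B" "B \<inter> drawing_set ?W p g = {}"
      and x2: "\<exists>x. x \<in> C2"
    using extend_cell[OF assms(5), of ?W] assms(9) by blast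
  have "antipodal ?W g A B"
    unfolding antipodal_def
  proof (intro ballI impI)
    fix a b c assume abc: "a \<in> ?W" "b \<in> ?W" "c \<in> ?W" "a \<noteq> b \<and> a \<noteq> c \<and> b \<noteq> c"
    let ?T = "triangle g a b c"
    have Tsub: "?T \<subseteq> drawing_set ?W p g"
      using abc unfolding triangle_def drawing_set_def by blast
    have AT: "A \<inter> ?T = {}" using A(4) Tsub by blast
    have BT: "B \<inter> ?T = {}" using B(4) Tsub by blast
    have "(C1 \<subseteq> inside ?T \<and> C2 \<subseteq> outside ?T) \<or> (C1 \<subseteq> outside ?T \<and> C2 \<subseteq> inside ?T)"
      using assms(6) abc unfolding antipodal_def by blast
    then show "(A \<subseteq> inside ?T \<and> B \<subseteq> outside ?T) \<or> (A \<subseteq> outside ?T \<and> B \<subseteq> inside ?T)"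
      using x1 x2 extend_side[OF A(3) AT _ A(2)] extend_side[OF B(3) BT _ B(2)] by blast
  qed
  then show ?thesis using A B by blast
qed

end
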